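(* Let $\Phi:\ell^\infty(\mathbb Z)\to\ell^\infty(\mathbb Z)$ be a contractive, idempotent linear map commuting with the backward shift $B$. If $\lambda_1,\lambda_2,\lambda_3\in\sigma(\Phi)$, then $\lambda_1\overline{\lambda_2}\lambda_3\in\sigma(\Phi)$. For any $\lambda\in\sigma(\Phi)$, the set $\overline{\lambda}\cdot\sigma(\Phi)=\{\overline\lambda\mu:\mu\in\sigma(\Phi)\}$ is a subgroup of $\mathbb T$. If in addition $\Phi$ is unital, then $\sigma(\Phi)$ is a subgroup of $\mathbb T$.
   Context: $(Bv)_n=v_{n+1}$. For $\lambda\in\mathbb T$ let $x_\lambda=(\lambda^n)_{n\in\mathbb Z}$; a linear map $\Phi$ commuting with $B$ satisfies $\Phi(x_\lambda)=c_\lambda x_\lambda$ for some scalar $c_\lambda$, and $\sigma(\Phi)=\{\lambda\in\mathbb T:c_\lambda\neq0\}$. *)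

theory Defs
  imports "HOL-Analysis.Analysis"
begin

definition linfty :: "(int \<Rightarrow> complex) set" where
  "linfty = {x. bounded (range x)}"

definition supnorm :: "(int \<Rightarrow> complex) \<Rightarrow> real" where
  "supnorm x = (SUP n. norm (x n))"

definition bshift :: "(int \<Rightarrow> complex) \<Rightarrow> (int \<Rightarrow> complex)" where
  "bshift v = (\<lambda>n. v (n + 1))"

definition charseq :: "complex \<Rightarrow> (int \<Rightarrow> complex)" where
  "charseq l = (\<lambda>n. l powi n)"

definition circle :: "complex set" where
  "circle = {z. norm z = 1}"

definition contr_idem_shift_inv :: "((int \<Rightarrow> complex) \<Rightarrow> (int \<Rightarrow> complex)) \<Rightarrow> bool" where
  "contr_idem_shift_inv \<Phi> \<longleftrightarrow>
     (\<forall>x\<in>linfty. \<Phi> x \<in> linfty) \<and>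
     (\<forall>x\<in>linfty. \<forall>y\<in>linfty. \<forall>a b. \<Phi> (\<lambda>n. a * x n + b * y n) = (\<lambda>n. a * \<Phi> x n + b * \<Phi> y n)) \<and>
     (\<forall>x\<in>linfty. supnorm (\<Phi> x) \<le> supnorm x) \<and>
     (\<forall>x\<in>linfty. \<Phi> (\<Phi> x) = \<Phi> x) \<and>
     (\<forall>x\<in>linfty. \<Phi> (bshift x) = bshift (\<Phi> x))"

definition spec :: "((int \<Rightarrow> complex) \<Rightarrow> (int \<Rightarrow> complex)) \<Rightarrow> complex set" where
  "spec \<Phi> = {l \<in> circle. \<exists>c. c \<noteq> 0 \<and> \<Phi> (charseq l) = (\<lambda>n. c * charseq l n)}"

definition circle_subgroup :: "complex set \<Rightarrow> bool" where
  "circle_subgroup S \<longleftrightarrow> S \<subseteq> circle \<and> 1 \<in> S \<and>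
     (\<forall>a\<in>S. \<forall>b\<in>S. a * b \<in> S) \<and> (\<forall>a\<in>S. inverse a \<in> S)"

end

theory Submission
  imports Defs
begin

lemma linfty_comb:
  assumes "x \<in> linfty" "y \<in> linfty"
  shows "(\<lambda>n. a * x n + b * y n) \<in> linfty"
proof -
  from assms obtain B1 B2 where B1: "\<forall>n. norm (x n) \<le> B1" and B2: "\<forall>n. norm (y n) \<le> B2"
    unfolding linfty_def bounded_iff by blast
  have "\<forall>n. norm (a * x n + b * y n) \<le> norm a * B1 + norm b * B2"
  proof
    fix n
    have "norm (a * x n + b * y n) \<le> norm a * norm (x n) + norm b * norm (y n)"
      by (metis norm_mult norm_triangle_ineq)
    also have "\<dots> \<le> norm a * B1 + norm b * B2"
      using B1 B2 by (simp add: add_mono mult_left_mono)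
    finally show "norm (a * x n + b * y n) \<le> norm a * B1 + norm b * B2" .
  qed
  then show ?thesis unfolding linfty_def bounded_iff by blast
qed

lemma charseq_norm: "l \<in> circle \<Longrightarrow> norm (charseq l n) = 1"
  by (simp add: circle_def charseq_def norm_power_int)

lemma charseq_linfty: "l \<in> circle \<Longrightarrow> charseq l \<in> linfty"
  unfolding linfty_def bounded_iff mem_Collect_eq by (rule exI[of _ 1]) (auto simp: charseq_norm)

lemma supnorm_upper: "x \<in> linfty \<Longrightarrow> norm (x n) \<le> supnorm x"
  unfolding supnorm_def linfty_def
  by (rule cSUP_upper) (auto simp: bdd_above_def bounded_iff)

lemma supnorm_least: "(\<And>n. norm (x n) \<le> B) \<Longrightarrow> supnorm x \<le> B"
  unfolding supnorm_def by (rule cSUP_least) auto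

lemma Phi_lin:
  assumes "contr_idem_shift_inv \<Phi>" "x \<in> linfty" "y \<in> linfty"
  shows "\<Phi> (\<lambda>n. a * x n + b * y n) = (\<lambda>n. a * \<Phi> x n + b * \<Phi> y n)"
  using assms unfolding contr_idem_shift_inv_def by blast

lemma Phi_scale:
  assumes "contr_idem_shift_inv \<Phi>" "x \<in> linfty"
  shows "\<Phi> (\<lambda>n. a * x n) = (\<lambda>n. a * \<Phi> x n)"
  using Phi_lin[OF assms assms(2), of a 0] by simp

lemma Phi_add:
  assumes "contr_idem_shift_inv \<Phi>" "x \<in> linfty" "y \<in> linfty"
  shows "\<Phi> (\<lambda>n. x n + y n) = (\<lambda>n. \<Phi> x n + \<Phi> y n)"
  using Phi_lin[OF assms, of 1 1] by simp

lemma Phi_char: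
  assumes "contr_idem_shift_inv \<Phi>" "l \<in> circle"
  shows "\<exists>c. \<Phi> (charseq l) = (\<lambda>n. c * charseq l n)"
proof -
  have l0: "l \<noteq> 0" using assms(2) by (auto simp: circle_def)
  have xl: "charseq l \<in> linfty" using charseq_linfty[OF assms(2)] .
  have "bshift (charseq l) = (\<lambda>n. l * charseq l n)"
    using l0 by (auto simp: bshift_def charseq_def power_int_add_1')
  hence "\<Phi> (bshift (charseq l)) = (\<lambda>n. l * \<Phi> (charseq l) n)"
    using Phi_scale[OF assms(1) xl] by simp
  hence step: "\<And>n. \<Phi> (charseq l) (n + 1) = l * \<Phi> (charseq l) n"
    using assms(1) xl unfolding contr_idem_shift_inv_def bshift_def by metis
  define c where "c = \<Phi> (charseq l) 0"
  have "\<Phi> (charseq l) n = c * charseq l n" for n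
  proof (induction n rule: int_induct[where k=0])
    case base
    then show ?case by (simp add: c_def charseq_def)
  next
    case (step1 i)
    then show ?case using step[of i] l0 by (simp add: charseq_def power_int_add_1')
  next
    case (step2 i)
    have "\<Phi> (charseq l) i = l * \<Phi> (charseq l) (i - 1)" using step[of "i - 1"] by simp
    moreover have "charseq l i = l * charseq l (i - 1)"
      using l0 by (metis charseq_def diff_add_cancel power_int_add_1')
    ultimately show ?case using step2 l0 by (metis mult_left_cancel mult.left_commute)
  qed
  then show ?thesis by blast
qed

lemma spec_fixed:
  assumes "contr_idem_shift_inv \<Phi>" "l \<in> spec \<Phi>"
  shows "\<Phi> (charseq l) = charseq l"
proof -
  from assms(2) obtain c where c: "c \<noteq> 0" "\<Phi> (charseq l) = (\<lambda>n. c * charseq l n)"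
    and l: "l \<in> circle" unfolding spec_def by blast
  have xl: "charseq l \<in> linfty" using charseq_linfty[OF l] .
  have "\<Phi> (\<Phi> (charseq l)) = \<Phi> (charseq l)" using assms(1) xl
    unfolding contr_idem_shift_inv_def by blast
  hence "(\<lambda>n. c * (c * charseq l n)) = (\<lambda>n. c * charseq l n)"
    using c Phi_scale[OF assms(1) xl, of c] by simp
  hence "c * (c * charseq l 0) = c * charseq l 0" by meson
  hence "c = 1" using c(1) by (simp add: charseq_def)
  thus ?thesis using c by simp
qed

lemma key_bound:
  fixes A B C :: complex
  assumes "norm A = 1" "norm B = 1" "norm C = 1"
  shows "norm (A + B + C - A * cnj B * C) \<le> sqrt 8"
proof -
  define u where "u = A * cnj B"
  define w where "w = C * cnj B"
  have Bc: "B * cnj B = 1" using complex_norm_square[of B] assms(2) by simp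
  have nu: "norm u = 1" using assms by (simp add: u_def norm_mult)
  have nw: "norm w = 1" using assms by (simp add: w_def norm_mult)
  have e1: "B * ((1 + u) + w * (1 - u)) = B + A * (B * cnj B) + C * (B * cnj B) - A * cnj B * C * (B * cnj B)"
    unfolding u_def w_def by (simp add: algebra_simps)
  have e: "A + B + C - A * cnj B * C = B * ((1 + u) + w * (1 - u))"
    using e1 Bc by simp
  have "norm (A + B + C - A * cnj B * C) = norm ((1 + u) + w * (1 - u))"
    using e assms(2) by (simp add: norm_mult)
  also have "\<dots> \<le> norm (1 + u) + norm (w * (1 - u))"
    by (rule norm_triangle_ineq)
  also have "\<dots> = norm (1 + u) + norm (1 - u)"
    using nw by (simp add: norm_mult)
  also have "\<dots> \<le> sqrt 8"
  proof (rule real_le_rsqrt)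
    have p: "(norm (1 + u))^2 + (norm (1 - u))^2 = 4"
    proof -
      have "(Re u)^2 + (Im u)^2 = 1" using nu by (metis cmod_power2 power_one)
      moreover have "(norm (1 + u))^2 = (1 + Re u)^2 + (Im u)^2" by (simp add: cmod_power2)
      moreover have "(norm (1 - u))^2 = (1 - Re u)^2 + (Im u)^2" by (simp add: cmod_power2)
      ultimately show ?thesis by (simp add: power2_eq_square algebra_simps)
    qed
    show "(norm (1 + u) + norm (1 - u))^2 \<le> 8"
      using p sum_squares_ge_zero[of "norm (1+u) - norm (1-u)" 0]
      by (simp add: power2_eq_square algebra_simps)
  qed
  finally show ?thesis .
qed

lemma triple:
  assumes Phi: "contr_idem_shift_inv \<Phi>" and a: "a \<in> spec \<Phi>" and b: "b \<in> spec \<Phi>" and c: "c \<in> spec \<Phi>"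
  shows "a * cnj b * c \<in> spec \<Phi>"
proof -
  define d where "d = a * cnj b * c"
  have ac: "a \<in> circle" and bc: "b \<in> circle" and cc: "c \<in> circle"
    using a b c by (auto simp: spec_def)
  have dc: "d \<in> circle" using ac bc cc by (simp add: circle_def d_def norm_mult)
  obtain k where k: "\<Phi> (charseq d) = (\<lambda>n. k * charseq d n)" using Phi_char[OF Phi dc] by blast
  have "k \<noteq> 0"
  proof
    assume k0: "k = 0"
    let ?xa = "charseq a" and ?xb = "charseq b" and ?xc = "charseq c" and ?xd = "charseq d"
    have la: "?xa \<in> linfty" "?xb \<in> linfty" "?xc \<in> linfty" "?xd \<in> linfty"
      using charseq_linfty ac bc cc dc by auto
    define s where "s = (\<lambda>n. ?xa n + ?xb n)"
    define t where "t = (\<lambda>n. s n + ?xc n)"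
    define y where "y = (\<lambda>n. t n + (-1) * ?xd n)"
    have ls: "s \<in> linfty" using linfty_comb[OF la(1,2), of 1 1] by (simp add: s_def)
    have lt: "t \<in> linfty" using linfty_comb[OF ls la(3), of 1 1] by (simp add: t_def)
    have ly: "y \<in> linfty" using linfty_comb[OF lt la(4), of 1 "-1"] by (simp add: y_def)
    have Ps: "\<Phi> s = (\<lambda>n. ?xa n + ?xb n)"
      unfolding s_def Phi_add[OF Phi la(1,2)] using spec_fixed[OF Phi a] spec_fixed[OF Phi b] by simp
    have Pt: "\<Phi> t = (\<lambda>n. ?xa n + ?xb n + ?xc n)"
      unfolding t_def Phi_add[OF Phi ls la(3)] using Ps spec_fixed[OF Phi c] by simp
    have Py: "\<Phi> y = (\<lambda>n. ?xa n + ?xb n + ?xc n)"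
      unfolding y_def using Phi_lin[OF Phi lt la(4), of 1 "-1"] Pt k k0 by simp
    have "norm (\<Phi> y 0) \<le> supnorm (\<Phi> y)"
      using supnorm_upper Phi ly unfolding contr_idem_shift_inv_def by blast
    also have "\<dots> \<le> supnorm y" using Phi ly unfolding contr_idem_shift_inv_def by blast
    also have "\<dots> \<le> sqrt 8"
    proof (rule supnorm_least)
      fix n
      have "y n = ?xa n + ?xb n + ?xc n - ?xa n * cnj (?xb n) * ?xc n"
        by (simp add: y_def t_def s_def d_def charseq_def power_int_mult_distrib)
      thus "norm (y n) \<le> sqrt 8"
        using key_bound charseq_norm ac bc cc by metis
    qed
    finally have "norm (\<Phi> y 0) \<le> sqrt 8" .
    moreover have "\<Phi> y 0 = 3" using Py by (simp add: charseq_def)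
    moreover have "sqrt 8 < (3::real)"
      by (metis real_sqrt_less_iff real_sqrt_abs abs_numeral power2_eq_square numeral_times_numeral
           semiring_norm less_numeral_simps order.strict_iff_not le_num_simps)
    ultimately show False by simp
  qed
  thus ?thesis using dc k unfolding spec_def d_def by blast
qed

theorem theorem2p9:
  fixes \<Phi> :: "(int \<Rightarrow> complex) \<Rightarrow> (int \<Rightarrow> complex)"
  assumes "contr_idem_shift_inv \<Phi>"
  shows "(\<forall>l1\<in>spec \<Phi>. \<forall>l2\<in>spec \<Phi>. \<forall>l3\<in>spec \<Phi>. l1 * cnj l2 * l3 \<in> spec \<Phi>)
     \<and> (\<forall>l\<in>spec \<Phi>. circle_subgroup ((\<lambda>\<mu>. cnj l * \<mu>) ` spec \<Phi>))
     \<and> (\<Phi> (\<lambda>n. 1) = (\<lambda>n. 1) \<longrightarrow> circle_subgroup (spec \<Phi>))"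
proof -
  have T: "\<And>l1 l2 l3. l1 \<in> spec \<Phi> \<Longrightarrow> l2 \<in> spec \<Phi> \<Longrightarrow> l3 \<in> spec \<Phi> \<Longrightarrow> l1 * cnj l2 * l3 \<in> spec \<Phi>"
    using triple[OF assms] by blast
  have unit: "\<And>l. l \<in> spec \<Phi> \<Longrightarrow> cnj l * l = 1"
    by (auto simp: spec_def circle_def) (metis complex_norm_square mult.commute of_real_1 power_one)
  have G: "circle_subgroup ((\<lambda>\<mu>. cnj l * \<mu>) ` spec \<Phi>)" if l: "l \<in> spec \<Phi>" for l
    unfolding circle_subgroup_def
  proof (intro conjI ballI)
    show "(\<lambda>\<mu>. cnj l * \<mu>) ` spec \<Phi> \<subseteq> circle"
      using l by (auto simp: spec_def circle_def norm_mult)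
    show "1 \<in> (\<lambda>\<mu>. cnj l * \<mu>) ` spec \<Phi>" using l unit by force
  next
    fix p q assume p: "p \<in> (\<lambda>\<mu>. cnj l * \<mu>) ` spec \<Phi>" and q: "q \<in> (\<lambda>\<mu>. cnj l * \<mu>) ` spec \<Phi>"
    then obtain m1 m2 where m: "m1 \<in> spec \<Phi>" "m2 \<in> spec \<Phi>" "p = cnj l * m1" "q = cnj l * m2" by blast
    have "p * q = cnj l * (m1 * cnj l * m2)" using m by (simp add: algebra_simps)
    thus "p * q \<in> (\<lambda>\<mu>. cnj l * \<mu>) ` spec \<Phi>" using T[OF m(1) l m(2)] by blast
  next
    fix p assume p: "p \<in> (\<lambda>\<mu>. cnj l * \<mu>) ` spec \<Phi>"
    then obtain m where m: "m \<in> spec \<Phi>" "p = cnj l * m" by blast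
    have "inverse p = cnj l * (l * cnj m * l)"
    proof -
      have "p * (cnj l * (l * cnj m * l)) = (cnj l * l) * (cnj m * m) * (cnj l * l)"
        using m by (simp add: algebra_simps)
      also have "\<dots> = 1" using unit l m by simp
      finally show ?thesis by (metis inverse_unique)
    qed
    thus "inverse p \<in> (\<lambda>\<mu>. cnj l * \<mu>) ` spec \<Phi>" using T[OF l m(1) l] by blast
  qed
  have U: "circle_subgroup (spec \<Phi>)" if h: "\<Phi> (\<lambda>n. 1) = (\<lambda>n. 1)"
  proof -
    have "charseq 1 = (\<lambda>n. 1)" by (simp add: charseq_def)
    hence "1 \<in> spec \<Phi>" using h by (auto simp: spec_def circle_def intro!: exI[of _ 1])
    from G[OF this] show ?thesis by simp
  qed
  show ?thesis using T G U by blast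
qed

end
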